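(* Let $b>0$ and define, for $r>0$, \[ \begin{aligned} \underline u_{\rm out}(r)&= Lr^{-m}-br^{-l},\\ \underline v_{\rm out}(r)&= m(n-2-m)Lr^{-m-2}- l(n-2-l)br^{-l-2},\\ \underline w_{\rm out}(r)&= m(m+2)(n-2-m)(n-4-m)Lr^{-m-4}- l(l+2)(n-2-l)(n-4-l)br^{-l-4}, \end{aligned} \] and $\underline r_1=(b/L)^{1/(l-m)}$. Then \[ -\Delta \underline u_{\rm out} =\underline v_{\rm out} \ \text{ for all } r>0,\qquad -\Delta \underline v_{\rm out} =\underline w_{\rm out} \ \text{ for all } r>0,\qquad -\Delta \underline w_{\rm out} \leqslant \underline u_{\rm out}^p \ \text{ for all } r>\underline r_1 . \]
   Context: Let $n\geqslant 15$ and $p>p_{\mathsf{JL}}(6,n)$, where $p_{\mathsf{JL}}(6,n)=\frac{(n+4)\sqrt{3} - \sqrt{\sqrt[3]{K_0+K_1}+ \sqrt[3]{K_0-K_1} + 3n^2+32 }}{(n-8)\sqrt{3} - \sqrt{\sqrt[3]{K_0+K_1} + \sqrt[3]{K_0-K_1} + 3n^2+32 }}$ with $2K_0 =-27n^6+324 n^5-756n^4-2592 n^3 + 25776 n^2 +5184 n -23744$, $2K_1 = \sqrt{(2K_0)^2 - 4(192n^2+256)^3}$. Let $m=6/(p-1)$, $L=\big(m(m+2)(m+4)(n-2-m)(n-4-m)(n-6-m)\big)^{1/(p-1)}$, and let $\lambda_3$ be the smallest positive root of $P(\lambda)=(m+\lambda)(m+\lambda+2)(m+\lambda+4)(n-2-m-\lambda)(n-4-m-\lambda)(n-6-m-\lambda)-pL^{p-1}$;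 set $l=m+\lambda_3$. For a function $f$ of $r>0$, $\Delta f$ denotes the Laplacian in $\mathbf R^n$ of $x\mapsto f(|x|)$, i.e. $f''+\frac{n-1}{r}f'$. *)

theory Defs
  imports "HOL-Analysis.Analysis"
begin

text \<open>Joseph--Lundgren type exponent p_JL(6,n). Cube roots are real cube roots (root 3).\<close>
definition pJL6 :: "real \<Rightarrow> real" where
  "pJL6 n = (let K0 = (-27*n^6 + 324*n^5 - 756*n^4 - 2592*n^3 + 25776*n^2 + 5184*n - 23744) / 2;
                 K1 = sqrt ((2*K0)^2 - 4*(192*n^2 + 256)^3) / 2;
                 S = sqrt (root 3 (K0 + K1) + root 3 (K0 - K1) + 3*n^2 + 32)
             in ((n + 4) * sqrt 3 - S) / ((n - 8) * sqrt 3 - S))"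

definition mexp :: "real \<Rightarrow> real" where
  "mexp p = 6 / (p - 1)"

definition Lconst :: "real \<Rightarrow> real \<Rightarrow> real" where
  "Lconst n p = (let m = mexp p in
     (m*(m+2)*(m+4)*(n-2-m)*(n-4-m)*(n-6-m)) powr (1/(p-1)))"

definition Ppoly :: "real \<Rightarrow> real \<Rightarrow> real \<Rightarrow> real" where
  "Ppoly n p lam = (let m = mexp p in
     (m+lam)*(m+lam+2)*(m+lam+4)*(n-2-m-lam)*(n-4-m-lam)*(n-6-m-lam) - p * (Lconst n p) powr (p-1))"

definition lam3 :: "real \<Rightarrow> real \<Rightarrow> real" where
  "lam3 n p = (LEAST lam::real. lam > 0 \<and> Ppoly n p lam = 0)"

definition lexp :: "real \<Rightarrow> real \<Rightarrow> real" where
  "lexp n p = mexp p + lam3 n p"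

definition rlap :: "real \<Rightarrow> (real \<Rightarrow> real) \<Rightarrow> real \<Rightarrow> real" where
  "rlap n f r = deriv (deriv f) r + (n - 1) / r * deriv f r"

definition uout :: "real \<Rightarrow> real \<Rightarrow> real \<Rightarrow> real \<Rightarrow> real" where
  "uout n p b r = Lconst n p * r powr (- mexp p) - b * r powr (- lexp n p)"

definition vout :: "real \<Rightarrow> real \<Rightarrow> real \<Rightarrow> real \<Rightarrow> real" where
  "vout n p b r = (let m = mexp p; l = lexp n p in
     m*(n-2-m) * Lconst n p * r powr (-m-2) - l*(n-2-l) * b * r powr (-l-2))"

definition wout :: "real \<Rightarrow> real \<Rightarrow> real \<Rightarrow> real \<Rightarrow> real" where
  "wout n p b r = (let m = mexp p; l = lexp n p in
     m*(m+2)*(n-2-m)*(n-4-m) * Lconst n p * r powr (-m-4)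
     - l*(l+2)*(n-2-l)*(n-4-l) * b * r powr (-l-4))"

definition rone :: "real \<Rightarrow> real \<Rightarrow> real \<Rightarrow> real" where
  "rone n p b = (b / Lconst n p) powr (1 / (lexp n p - mexp p))"

end

theory Submission
  imports Defs
begin

lemma polyD:
  fixes N :: real assumes "N \<ge> 15"
  shows "0 < (-27*N^6 + 324*N^5 - 756*N^4 - 2592*N^3 + 25776*N^2 + 5184*N - 23744)^2 - 4*(192*N^2+256)^3"
proof -
  define k where "k = N - 15"
  have k: "k \<ge> 0" and N: "N = k + 15" using assms by (auto simp: k_def)
  have "(-27*N^6 + 324*N^5 - 756*N^4 - 2592*N^3 + 25776*N^2 + 5184*N - 23744)^2 - 4*(192*N^2+256)^3
     = 10214160759983817 + k*(10585461850409628 + k*(4894534148604354 + k*(1347076448060364 + k*(246965545626615 + k*(31863611628216 + k*(2971699904988 + k*(202081266936 + k*(9951685191 + k*(346289580 + k*(8084610 + k*(113724 + k*(729))))))))))))"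
    unfolding N by algebra
  also have "\<dots> > 0" using k by (intro add_pos_nonneg mult_nonneg_nonneg add_nonneg_nonneg) auto
  finally show ?thesis .
qed

lemma polyK0:
  fixes N :: real assumes "N \<ge> 15"
  shows "(-27*N^6 + 324*N^5 - 756*N^4 - 2592*N^3 + 25776*N^2 + 5184*N - 23744) < 0"
proof -
  define k where "k = N - 15"
  have k: "k \<ge> 0" and N: "N = k + 15" using assms by (auto simp: k_def)
  have "-(-27*N^6 + 324*N^5 - 756*N^4 - 2592*N^3 + 25776*N^2 + 5184*N - 23744)
     = 2*((102676259/2) + k*(26091693 + k*((10679589/2) + k*(570726 + k*((67581/2) + k*(1053 + k*((27/2))))))))"
    unfolding N by algebra
  also have "\<dots> > 0" using k by (intro mult_pos_pos add_pos_nonneg mult_nonneg_nonneg add_nonneg_nonneg) auto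
  finally show ?thesis by linarith
qed

lemma polyP3:
  fixes N :: real assumes "N \<ge> 15"
  shows "0 < (-48*N+160)^3 - 3*(192*N^2+256)*(-48*N+160) - (-27*N^6 + 324*N^5 - 756*N^4 - 2592*N^3 + 25776*N^2 + 5184*N - 23744)"
proof -
  define k where "k = N - 15"
  have k: "k \<ge> 0" and N: "N = k + 15" using assms by (auto simp: k_def)
  have "(-48*N+160)^3 - 3*(192*N^2+256)*(-48*N+160) - (-27*N^6 + 324*N^5 - 756*N^4 - 2592*N^3 + 25776*N^2 + 5184*N - 23744)
     = 66339 + k*(22959450 + k*(7960869 + k*(1058508 + k*(67581 + k*(2106 + k*(27))))))"
    unfolding N by algebra
  also have "\<dots> > 0" using k by (intro add_pos_nonneg mult_nonneg_nonneg add_nonneg_nonneg) auto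
  finally show ?thesis .
qed

lemma polyP4:
  fixes N :: real assumes "N \<ge> 15"
  shows "(-3*N^2-32)^3 - 3*(192*N^2+256)*(-3*N^2-32) - (-27*N^6 + 324*N^5 - 756*N^4 - 2592*N^3 + 25776*N^2 + 5184*N - 23744) < 0"
proof -
  define k where "k = N - 15"
  have k: "k \<ge> 0" and N: "N = k + 15" using assms by (auto simp: k_def)
  have "-((-3*N^2-32)^3 - 3*(192*N^2+256)*(-3*N^2-32) - (-27*N^6 + 324*N^5 - 756*N^4 - 2592*N^3 + 25776*N^2 + 5184*N - 23744))
     = 158546808 + k*(58825764 + k*(8645616 + k*(629208 + k*(22680 + k*(324)))))"
    unfolding N by algebra
  also have "\<dots> > 0" using k by (intro add_pos_nonneg mult_nonneg_nonneg add_nonneg_nonneg) auto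
  finally show ?thesis by linarith
qed

lemma bern:
  fixes p s :: real
  assumes "1 \<le> p" "0 \<le> s" "s < 1"
  shows "1 - p * s \<le> (1 - s) powr p"
proof -
  define g where "g x = (1-x) powr p + p*x" for x
  have "g 0 \<le> g s"
  proof (rule DERIV_nonneg_imp_increasing_open[OF assms(2)])
    fix x assume x: "0 < x" "x < s"
    have "(g has_real_derivative (p * (1-x) powr (p-1) * (-1) + p)) (at x)"
      unfolding g_def using x assms
      by (auto intro!: derivative_eq_intros)
    moreover have "(1-x) powr (p-1) \<le> 1"
      using x assms by (intro powr_le1) auto
    ultimately show "\<exists>y. (g has_real_derivative y) (at x) \<and> 0 \<le> y"
      using assms by (intro exI[of _ "p * (1-x) powr (p-1) * (-1) + p"]) (auto simp: mult_left_le)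
  next
    show "continuous_on {0..s} g"
      unfolding g_def using assms by (auto intro!: continuous_intros)
  qed
  then show ?thesis unfolding g_def using assms by simp
qed

lemma powr_m1: "(r::real) > 0 \<Longrightarrow> r powr (e - 1) = r powr (e - 2) * r"
proof -
  assume "r > 0"
  then have "r powr (e - 2 + 1) = r powr (e - 2) * r powr 1" by (simp only: powr_add)
  moreover have "e - 2 + 1 = e - 1" by simp
  ultimately show ?thesis using \<open>r>0\<close> by simp
qed

lemma rlap_two:
  fixes A B e1 e2 N r :: real
  assumes r: "r > 0"
  shows "rlap N (\<lambda>x. A * x powr e1 - B * x powr e2) r
       = A*e1*(e1+N-2) * r powr (e1-2) - B*e2*(e2+N-2) * r powr (e2-2)"
proof -
  define f where "f = (\<lambda>x::real. A * x powr e1 - B * x powr e2)"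
  define f' where "f' = (\<lambda>x::real. A*e1*x powr (e1-1) - B*e2*x powr (e2-1))"
  have d1: "(f has_real_derivative f' x) (at x)" if "x > 0" for x
    unfolding f_def f'_def using that by (auto intro!: derivative_eq_intros)
  have dd: "deriv f x = f' x" if "x > 0" for x using DERIV_imp_deriv[OF d1[OF that]] .
  have d2: "(f' has_real_derivative (A*e1*(e1-1)*r powr (e1-1-1) - B*e2*(e2-1)*r powr (e2-1-1))) (at r)"
    unfolding f'_def using r by (auto intro!: derivative_eq_intros)
  have d3: "(deriv f has_real_derivative (A*e1*(e1-1)*r powr (e1-1-1) - B*e2*(e2-1)*r powr (e2-1-1))) (at r)"
    by (rule has_field_derivative_transform_within_open[OF d2, of "{0<..}"]) (use r dd in auto)
  have "rlap N f r = (A*e1*(e1-1)*r powr (e1-2) - B*e2*(e2-1)*r powr (e2-2))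
        + (N - 1) / r * (A*e1*(r powr (e1-2) * r) - B*e2*(r powr (e2-2) * r))"
    unfolding rlap_def DERIV_imp_deriv[OF d3] dd[OF r] f'_def using r
    by (simp add: powr_m1 algebra_simps)
  also have "\<dots> = A*e1*(e1+N-2) * r powr (e1-2) - B*e2*(e2+N-2) * r powr (e2-2)"
    using r by (simp add: field_simps)
  finally show ?thesis unfolding f_def .
qed

lemma prod3_mono:
  fixes x1 x2 x3 y1 y2 y3 :: real
  assumes "0 \<le> x1" "0 \<le> x2" "0 \<le> x3" "x1 \<le> y1" "x2 \<le> y2" "x3 \<le> y3"
  shows "x1*x2*x3 \<le> y1*y2*y3"
proof -
  have "x1*x2 \<le> y1*y2" using assms by (intro mult_mono) auto
  moreover have "0 \<le> y1*y2" using assms by simp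
  ultimately show ?thesis using assms by (intro mult_mono) auto
qed

lemma key:
  fixes N p :: real
  assumes N: "N \<ge> 15" and hp: "p > pJL6 N"
  defines "m \<equiv> 6/(p-1)"
  shows "p > 1 \<and> 0 < m \<and> m < (N-8)/2 \<and>
    (m+2)*(m+4)*(m+6)*(N-2-m)*(N-4-m)*(N-6-m) \<le> ((N-6)/2*((N-6)/2+2)*((N-6)/2+4))^2"
proof -
  define P0 where "P0 = -27*N^6 + 324*N^5 - 756*N^4 - 2592*N^3 + 25776*N^2 + 5184*N - 23744"
  define K0 where "K0 = P0/2"
  define c where "c = 192*N^2+256"
  define K1 where "K1 = sqrt ((2*K0)^2 - 4*c^3)/2"
  define u where "u = root 3 (K0+K1)"
  define v where "v = root 3 (K0-K1)"
  define S where "S = sqrt (u + v + 3*N^2 + 32)"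
  have pj: "pJL6 N = ((N+4)* sqrt 3 - S)/((N-8)* sqrt 3 - S)"
    unfolding pJL6_def Let_def S_def u_def v_def K1_def K0_def c_def P0_def by simp
  have "0 < P0^2 - 4*c^3" using polyD[OF N] unfolding P0_def c_def .
  moreover have "2*K0 = P0" unfolding K0_def by simp
  ultimately have D: "0 < (2*K0)^2 - 4*c^3" by simp
  have "(sqrt ((2*K0)^2 - 4*c^3))^2 = (2*K0)^2 - 4*c^3" using D by simp
  then have K1sq: "K1^2 = K0^2 - c^3" unfolding K1_def by (simp add: power_divide algebra_simps)
  have cpos: "c > 0" unfolding c_def by (simp add: add_nonneg_pos)
  have u3: "u^3 = K0+K1" unfolding u_def by (simp add: odd_real_root_pow)
  have v3: "v^3 = K0-K1" unfolding v_def by (simp add: odd_real_root_pow)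
  have "u* v = root 3 ((K0+K1)*(K0-K1))" unfolding u_def v_def by (simp add: real_root_mult)
  also have "(K0+K1)*(K0-K1) = c^3" using K1sq by (simp add: algebra_simps power2_eq_square)
  also have "root 3 (c^3) = c" using cpos by (intro real_root_power_cancel) auto
  finally have uv: "u* v = c" .
  define t where "t = u+v"
  have "t^3 = u^3 + v^3 + 3*(u* v)*(u+v)" unfolding t_def by algebra
  then have ft: "t^3 - 3*c*t - P0 = 0" using u3 v3 uv unfolding t_def K0_def by simp
  have "t^2 - 4*c = (u-v)^2" unfolding t_def uv[symmetric] by algebra
  then have t2: "t^2 \<ge> 4*c" by (metis diff_ge_0_iff_ge zero_le_power2)
  have P0neg: "P0 < 0" using polyK0[OF N] unfolding P0_def .
  have tneg: "t < 0"
  proof (rule ccontr)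
    assume "\<not> t < 0"
    then have "t * (t^2 - 3*c) \<ge> 0" using t2 cpos by (intro mult_nonneg_nonneg) auto
    moreover have "t * (t^2 - 3*c) = P0" using ft by (simp add: algebra_simps power3_eq_cube power2_eq_square)
    ultimately show False using P0neg by simp
  qed
  have tlow: "t \<ge> -3*N^2-32"
  proof (rule ccontr)
    define T where "T = -3*N^2-32"
    assume "\<not> t \<ge> -3*N^2-32"
    then have tT: "t < T" unfolding T_def by simp
    have "N^2 \<ge> 0" by simp
    then have Tneg: "T < 0" unfolding T_def by linarith
    have "T*t > 0" using Tneg tneg by (simp add: mult_neg_neg)
    moreover have "T^2 \<ge> 0" by simp
    ultimately have "T^2 + T*t + t^2 - 3*c > 0" using t2 cpos by linarith
    then have pos: "(T - t) * (T^2 + T*t + t^2 - 3*c) > 0" using tT by simp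
    have "T^3 - 3*c*T - P0 = (t^3 - 3*c*t - P0) + (T - t) * (T^2 + T*t + t^2 - 3*c)" by algebra
    then have "T^3 - 3*c*T - P0 > 0" using ft pos by simp
    moreover have "T^3 - 3*c*T - P0 < 0" using polyP4[OF N] unfolding T_def c_def P0_def .
    ultimately show False by simp
  qed
  have tup: "t < -48*N+160"
  proof (rule ccontr)
    define T where "T = -48*N+160"
    assume "\<not> t < -48*N+160"
    then have tT: "T \<le> t" unfolding T_def by simp
    have Tneg: "T < 0" unfolding T_def using N by simp
    have "T*t > 0" using Tneg tneg by (simp add: mult_neg_neg)
    moreover have "T^2 \<ge> 0" by simp
    ultimately have "T^2 + T*t + t^2 - 3*c > 0" using t2 cpos by linarith
    then have np: "(T - t) * (T^2 + T*t + t^2 - 3*c) \<le> 0" using tT by (simp add: mult_nonpos_nonneg)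
    have "T^3 - 3*c*T - P0 = (t^3 - 3*c*t - P0) + (T - t) * (T^2 + T*t + t^2 - 3*c)" by algebra
    then have "T^3 - 3*c*T - P0 \<le> 0" using ft np by simp
    moreover have "T^3 - 3*c*T - P0 > 0" using polyP3[OF N] unfolding T_def c_def P0_def .
    ultimately show False by simp
  qed
  define arg where "arg = t + 3*N^2 + 32"
  have Sarg: "S = sqrt arg" unfolding S_def arg_def t_def by (simp add: add.assoc)
  have arg0: "arg \<ge> 0" using tlow unfolding arg_def by simp
  have e1: "3*(N-8)^2 = 3*N^2 - 48*N + 192" by (simp add: power2_eq_square algebra_simps)
  have arg1: "arg < 3*(N-8)^2" using tup unfolding arg_def e1 by linarith
  have S0: "S \<ge> 0" using arg0 unfolding Sarg by simp
  have S2: "S^2 = arg" using arg0 unfolding Sarg by simp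
  have s3: "sqrt 3 > 0" by simp
  have s3sq: "(sqrt 3)^2 = 3" by simp
  have e2: "((N-8)* sqrt 3)^2 = (N-8)^2 * 3" by (simp add: power_mult_distrib)
  have "S^2 < ((N-8)* sqrt 3)^2" using arg1 S2 unfolding e2 by linarith
  moreover have "0 \<le> (N-8)* sqrt 3" using N by simp
  ultimately have SN: "S < (N-8)* sqrt 3" by (rule power_less_imp_less_base)
  define d where "d = (N-8)* sqrt 3 - S"
  have dpos: "d > 0" using SN unfolding d_def by simp
  have "pJL6 N = 1 + 12* sqrt 3/d" unfolding pj d_def[symmetric] using dpos
    by (simp add: field_simps d_def)
  then have p1: "p - 1 > 12* sqrt 3/d" using hp by simp
  have q: "12* sqrt 3/d > 0" using dpos by simp
  have pg1: "p > 1" using p1 q by simp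
  have mpos: "m > 0" unfolding m_def using pg1 by simp
  have "m < 6/(12* sqrt 3/d)" unfolding m_def using p1 q pg1 dpos by (intro divide_strict_left_mono) auto
  also have "6/(12* sqrt 3/d) = (N-8)/2 - S/(2* sqrt 3)" unfolding d_def using s3
    by (simp add: field_simps)
  finally have mlt: "m < (N-8)/2 - S/(2* sqrt 3)" .
  define cc where "cc = (N-8)/2"
  define wm where "wm = (cc - m)^2"
  have S3: "S/(2* sqrt 3) \<ge> 0" using S0 by simp
  have cm: "cc - m > S/(2* sqrt 3)" using mlt unfolding cc_def by simp
  have "(S/(2* sqrt 3))^2 = arg/12" using S2 s3sq by (simp add: power_divide power_mult_distrib)
  moreover have "(S/(2* sqrt 3))^2 \<le> wm" unfolding wm_def using cm S3 by (intro power_mono) auto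
  ultimately have w1: "arg/12 \<le> wm" by simp
  have w2: "wm < (cc+2)^2" unfolding wm_def using cm S3 mpos
    by (intro power_strict_mono) auto
  have cc0: "cc \<ge> 0" unfolding cc_def using N by simp
  have "(cc+2)^2 \<le> (cc+4)^2" "(cc+4)^2 \<le> (cc+6)^2" using cc0 by (auto intro!: power_mono)
  then have gle: "((cc+2)^2 - wm)*((cc+4)^2 - wm)*((cc+6)^2 - wm)
      \<le> ((cc+2)^2 - arg/12)*((cc+4)^2 - arg/12)*((cc+6)^2 - arg/12)"
    using w1 w2 by (intro prod3_mono) auto
  have gid: "(m+2)*(m+4)*(m+6)*(N-2-m)*(N-4-m)*(N-6-m) = ((cc+2)^2 - wm)*((cc+4)^2 - wm)*((cc+6)^2 - wm)"
    unfolding wm_def cc_def by algebra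
  have qid: "((cc+2)^2 - arg/12)*((cc+4)^2 - arg/12)*((cc+6)^2 - arg/12)
     = ((N-6)/2*((N-6)/2+2)*((N-6)/2+4))^2 - (t^3 - 3*c*t - P0)/1728"
    unfolding cc_def arg_def c_def P0_def by (simp add: field_simps) algebra
  have qh: "((cc+2)^2 - arg/12)*((cc+4)^2 - arg/12)*((cc+6)^2 - arg/12)
     = ((N-6)/2*((N-6)/2+2)*((N-6)/2+4))^2" using qid ft by simp
  have gQ: "(m+2)*(m+4)*(m+6)*(N-2-m)*(N-4-m)*(N-6-m) \<le> ((N-6)/2*((N-6)/2+2)*((N-6)/2+4))^2"
    unfolding gid qh[symmetric] by (rule gle)
  have "m < (N-8)/2" using mlt S3 by linarith
  then show ?thesis using pg1 mpos gQ by blast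
qed

lemma params:
  fixes n :: nat and p :: real
  assumes n: "n \<ge> 15" and hp: "p > pJL6 (real n)"
  defines "N \<equiv> real n" and "m \<equiv> mexp p" and "L \<equiv> Lconst (real n) p"
  defines "Aa \<equiv> m*(m+2)*(m+4)*(N-2-m)*(N-4-m)*(N-6-m)"
  shows "p > 1" "m > 0" "m*(p-1) = 6" "Aa > 0" "L > 0" "L powr (p-1) = Aa"
    "lam3 N p > 0" "(m + lam3 N p)*(m + lam3 N p+2)*(m + lam3 N p+4)*(N-2-(m + lam3 N p))
        *(N-4-(m + lam3 N p))*(N-6-(m + lam3 N p)) = p * Aa"
proof -
  have N: "N \<ge> 15" unfolding N_def using n by simp
  have K: "p > 1 \<and> 0 < m \<and> m < (N-8)/2 \<and>
    (m+2)*(m+4)*(m+6)*(N-2-m)*(N-4-m)*(N-6-m) \<le> ((N-6)/2*((N-6)/2+2)*((N-6)/2+4))^2"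
    using key[OF N hp[folded N_def]] unfolding m_def mexp_def .
  then have p1: "p > 1" and m0: "m > 0" and mN: "m < (N-8)/2"
    and gQ: "(m+2)*(m+4)*(m+6)*(N-2-m)*(N-4-m)*(N-6-m) \<le> ((N-6)/2*((N-6)/2+2)*((N-6)/2+4))^2"
    by auto
  show "p > 1" "m > 0" by (fact p1, fact m0)
  show mp: "m*(p-1) = 6" unfolding m_def mexp_def using p1 by (simp add: field_simps)
  show A0: "Aa > 0" unfolding Aa_def using m0 mN by (intro mult_pos_pos) auto
  have Ldef: "L = Aa powr (1/(p-1))"
    unfolding L_def Lconst_def Let_def Aa_def m_def N_def ..
  show "L > 0" unfolding Ldef using A0 by simp
  have Lp: "L powr (p-1) = Aa" unfolding Ldef powr_powr using p1 A0 by simp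
  then show "L powr (p-1) = Aa" .
  have pm: "p = (m+6)/m" using mp m0 by (simp add: field_simps)
  have pA: "p * Aa = (m+2)*(m+4)*(m+6)*(N-2-m)*(N-4-m)*(N-6-m)"
    unfolding pm Aa_def using m0 by (simp add: field_simps)
  define Q where "Q x = x*(x+2)*(x+4)*(N-2-x)*(N-4-x)*(N-6-x)" for x
  have PP: "Ppoly N p x = Q (m+x) - p*Aa" for x
    unfolding Ppoly_def Let_def Q_def m_def[symmetric] L_def[symmetric, folded N_def] Lp
    by (simp add: algebra_simps)
  define h where "h = (N-6)/2"
  have hh: "N-2-h = h+4" "N-4-h = h+2" "N-6-h = h" by (simp_all add: h_def field_simps)
  have Qh: "Q h = (h*(h+2)*(h+4))^2" unfolding Q_def hh by (simp add: power2_eq_square mult_ac)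
  define lm where "lm = h - m"
  have lm0: "lm > 0" unfolding lm_def h_def using mN by simp
  have QA: "Q (m+0) = Aa" unfolding Q_def Aa_def by simp
  have "Aa < p*Aa" using A0 p1 by simp
  then have P0: "Ppoly N p 0 < 0" unfolding PP QA by simp
  have Plm: "Ppoly N p lm \<ge> 0" unfolding PP lm_def using gQ pA Qh by (simp add: h_def)
  have cont: "continuous_on UNIV (Ppoly N p)"
    unfolding Ppoly_def Let_def by (intro continuous_intros)
  obtain x0 where x0: "0 \<le> x0" "x0 \<le> lm" "Ppoly N p x0 = 0"
    using IVT'[of "Ppoly N p" 0 0 lm] P0 Plm lm0 continuous_on_subset[OF cont] by force
  define Z where "Z = {0..lm} \<inter> {x. Ppoly N p x = 0}"
  have "compact Z" unfolding Z_def
    by (intro compact_Int_closed closed_Collect_eq cont) auto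
  moreover have "Z \<noteq> {}" using x0 unfolding Z_def by auto
  ultimately have "\<exists>s\<in>Z. \<forall>t\<in>Z. s \<le> t" by (rule compact_attains_inf)
  then obtain mu where mu: "mu \<in> Z" "\<And>y. y \<in> Z \<Longrightarrow> mu \<le> y" by blast
  have mu0: "mu > 0"
  proof -
    have "mu \<ge> 0" "Ppoly N p mu = 0" using mu(1) unfolding Z_def by auto
    moreover have "mu \<noteq> 0" using P0 \<open>Ppoly N p mu = 0\<close> by auto
    ultimately show ?thesis by simp
  qed
  have lam: "lam3 N p = mu"
    unfolding lam3_def
  proof (rule Least_equality)
    show "mu > 0 \<and> Ppoly N p mu = 0" using mu0 mu(1) unfolding Z_def by auto
  next
    fix y assume y: "y > 0 \<and> Ppoly N p y = 0"
    show "mu \<le> y"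
    proof (cases "y \<le> lm")
      case True then show ?thesis using y mu(2) unfolding Z_def by auto
    next
      case False then show ?thesis using mu(1) unfolding Z_def by auto
    qed
  qed
  show "lam3 N p > 0" using lam mu0 by simp
  have "Ppoly N p (lam3 N p) = 0" using lam mu(1) unfolding Z_def by auto
  then show "(m + lam3 N p)*(m + lam3 N p+2)*(m + lam3 N p+4)*(N-2-(m + lam3 N p))
        *(N-4-(m + lam3 N p))*(N-6-(m + lam3 N p)) = p * Aa"
    unfolding PP Q_def by simp
qed

theorem lemma3p1:
  fixes n :: nat and p b :: real
  assumes "n \<ge> 15" and "p > pJL6 (real n)" and "b > 0"
  shows "(\<forall>r>0. - rlap (real n) (uout (real n) p b) r = vout (real n) p b r)
       \<and> (\<forall>r>0. - rlap (real n) (vout (real n) p b) r = wout (real n) p b r)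
       \<and> (\<forall>r>rone (real n) p b. - rlap (real n) (wout (real n) p b) r \<le> (uout (real n) p b r) powr p)"
proof -
  define N where "N = real n"
  define m where "m = mexp p"
  define L where "L = Lconst (real n) p"
  define Aa where "Aa = m*(m+2)*(m+4)*(N-2-m)*(N-4-m)*(N-6-m)"
  define l where "l = lexp N p"
  have b0: "b > 0" by (fact assms(3))
  note P = params[OF assms(1,2), folded N_def m_def L_def, folded Aa_def]
  have p1: "p > 1" and m0: "m > 0" and mp: "m*(p-1) = 6" and A0: "Aa > 0" and L0: "L > 0"
    and Lp: "L powr (p-1) = Aa" using P(1-6) by auto
  have ldef: "l = m + lam3 N p" unfolding l_def lexp_def m_def ..
  have lm: "l > m" using P(7) ldef by simp
  have Ql: "l*(l+2)*(l+4)*(N-2-l)*(N-4-l)*(N-6-l) = p * Aa" using P(8) unfolding ldef .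
  have uo: "uout N p b = (\<lambda>x. L * x powr (-m) - b * x powr (-l))"
    by (rule ext) (simp add: uout_def m_def L_def l_def N_def)
  have vo: "vout N p b = (\<lambda>x. (m*(N-2-m)*L) * x powr (-m-2) - (l*(N-2-l)*b) * x powr (-l-2))"
    by (rule ext) (simp add: vout_def Let_def m_def L_def l_def N_def)
  have wo: "wout N p b = (\<lambda>x. (m*(m+2)*(N-2-m)*(N-4-m)*L) * x powr (-m-4)
       - (l*(l+2)*(N-2-l)*(N-4-l)*b) * x powr (-l-4))"
    by (rule ext) (simp add: wout_def Let_def m_def L_def l_def N_def)
  have e1: "-m-2-2 = -m-4" "-l-2-2 = -l-4" "-m-4-2 = -m-6" "-l-4-2 = -l-6" by simp_all
  have part1: "\<forall>r>0. - rlap N (uout N p b) r = vout N p b r"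
  proof (intro allI impI)
    fix r :: real assume r: "r > 0"
    show "- rlap N (uout N p b) r = vout N p b r"
      unfolding uo rlap_two[OF r] vo by (simp add: algebra_simps)
  qed
  have part2: "\<forall>r>0. - rlap N (vout N p b) r = wout N p b r"
  proof (intro allI impI)
    fix r :: real assume r: "r > 0"
    show "- rlap N (vout N p b) r = wout N p b r"
      unfolding vo rlap_two[OF r] wo e1 by (simp add: algebra_simps)
  qed
  have w3: "- rlap N (wout N p b) r = Aa*L*r powr (-m-6) - p*Aa*b*r powr (-l-6)" if r: "r > 0" for r
  proof -
    have "- rlap N (wout N p b) r = (m*(m+2)*(m+4)*(N-2-m)*(N-4-m)*(N-6-m))*L*r powr (-m-6)
         - (l*(l+2)*(l+4)*(N-2-l)*(N-4-l)*(N-6-l))*b*r powr (-l-6)"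
      unfolding wo rlap_two[OF r] e1 by (simp add: algebra_simps)
    then show ?thesis unfolding Ql Aa_def by simp
  qed
  have part3: "\<forall>r>rone N p b. - rlap N (wout N p b) r \<le> (uout N p b r) powr p"
  proof (intro allI impI)
    fix r assume rr: "r > rone N p b"
    have rone: "rone N p b = (b/L) powr (1/(l-m))"
      unfolding rone_def L_def l_def m_def N_def ..
    have bL: "b/L > 0" using b0 L0 by simp
    have r0: "r > 0" using rr unfolding rone by (smt (verit) powr_ge_zero)
    have "((b/L) powr (1/(l-m))) powr (l-m) < r powr (l-m)"
      using rr lm unfolding rone by (intro powr_less_mono2) auto
    moreover have "((b/L) powr (1/(l-m))) powr (l-m) = b/L"
      unfolding powr_powr using lm bL b0 L0 by simp
    ultimately have rl: "b/L < r powr (l-m)" by simp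
    define X where "X = L * r powr (-m)"
    define Y where "Y = b * r powr (-l)"
    have X0: "X > 0" unfolding X_def using L0 r0 by simp
    have Y0: "Y > 0" unfolding Y_def using b0 r0 by simp
    have rsplit: "r powr (-m) = r powr (l-m) * r powr (-l)"
      using r0 by (simp add: powr_add[symmetric])
    have "b < L * r powr (l-m)" using rl L0 by (simp add: field_simps)
    then have "b * r powr (-l) < L * r powr (l-m) * r powr (-l)"
      using r0 by simp
    then have YX: "Y < X" unfolding X_def Y_def rsplit by (simp add: mult.assoc)
    define s where "s = Y/X"
    have s0: "0 \<le> s" "s < 1" unfolding s_def using X0 Y0 YX by auto
    have u: "uout N p b r = X * (1 - s)" unfolding uo X_def Y_def s_def
      using X0 X_def L0 by (simp add: field_simps)
    have up: "(uout N p b r) powr p = X powr p * (1-s) powr p"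
      unfolding u using X0 s0 by (simp add: powr_mult)
    have Xp: "X powr p = Aa * L * r powr (-m-6)"
    proof -
      have "X powr p = L powr p * r powr (-m*p)"
        unfolding X_def powr_mult powr_powr ..
      moreover have "L powr p = Aa * L"
      proof -
        have "L powr p = L powr ((p-1) + 1)" by simp
        also have "\<dots> = L powr (p-1) * L powr 1" by (rule powr_add)
        finally show ?thesis using Lp L0 by simp
      qed
      moreover have "-m*p = -m-6" using mp by (simp add: algebra_simps)
      ultimately show ?thesis by simp
    qed
    have be: "1 - p* s \<le> (1-s) powr p" using bern[of p s] p1 s0 by simp
    have "Aa * L * r powr (-m-6) * (1 - p* s) \<le> Aa * L * r powr (-m-6) * (1-s) powr p"
      by (rule mult_left_mono[OF be]) (use A0 L0 in simp)
    then have "(uout N p b r) powr p \<ge> Aa * L * r powr (-m-6) * (1 - p* s)"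
      unfolding up Xp .
    moreover have "Aa * L * r powr (-m-6) * (1 - p* s) = Aa*L*r powr (-m-6) - p*Aa*b*r powr (-l-6)"
    proof -
      have ex: "r powr (-m-6) * r powr (-l) = r powr (-l-6) * r powr (-m)"
        using r0 by (simp add: powr_add[symmetric] algebra_simps)
      have "L * r powr (-m-6) * s = L * b * (r powr (-m-6) * r powr (-l)) / (L * r powr (-m))"
        unfolding s_def X_def Y_def by (simp add: mult_ac)
      also have "\<dots> = b * r powr (-l-6) * (L * r powr (-m)) / (L * r powr (-m))"
        unfolding ex by (simp add: mult_ac)
      also have "\<dots> = b * r powr (-l-6)" using L0 r0 by simp
      finally have "L * r powr (-m-6) * s = b * r powr (-l-6)" .
      then show ?thesis by (simp add: algebra_simps)
    qed
    ultimately show "- rlap N (wout N p b) r \<le> (uout N p b r) powr p"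
      using w3[OF r0] by simp
  qed
  show ?thesis using part1 part2 part3 unfolding N_def by blast
qed

end
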